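(* Let $k\ge2$ be an integer and, for a positive integer $A$, let $f^\infty_A$ be the infinite word $(\mathsf{1}^A\mathsf{2}^A\cdots\mathsf{k}^A)(\mathsf{1}^A\mathsf{2}^A\cdots\mathsf{k}^A)\cdots$ over $[k]$. Let $A,B$ be positive integers with $kA\le B$, and let $s=(w_1',w_2')$ be a (finite) common subsequence between $f^\infty_A$ and $f^\infty_B$. Then \[\operatorname{span} s\ \ge\ \left(k+1-\frac{kA}{B}\right)\operatorname{len} s-2(A+B).\]
   Context: $\alpha^A$ denotes the letter $\alpha$ repeated $A$ times. Symbols in words are treated as distinguishable positions. A common subsequence of words $w_1,w_2$ is a pair $s=(w_1',w_2')$ of subsequences of $w_1$ and $w_2$ respectively that are equal as words; $\operatorname{len} s$ is their common length. The span $\operatorname{span}_w w'$ of a subsequence $w'$ of $w$ is the length of the shortest block of consecutive symbols of $w$ containing $w'$, and $\operatorname{span} s=\operatorname{span}_{w_1}w_1'+\operatorname{span}_{w_2}w_2'$. *)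

theory Defs
  imports Complex_Main
begin

definition fword :: "nat \<Rightarrow> nat \<Rightarrow> nat \<Rightarrow> nat" where
  "fword k A i = (i div A) mod k + 1"

text \<open>A subsequence of a word w is given by its strictly increasing list of positions.
  Its span is the length of the shortest block of consecutive symbols containing it
  (0 for the empty subsequence).\<close>
definition span_pos :: "nat list \<Rightarrow> nat" where
  "span_pos ps = (if ps = [] then 0 else last ps - hd ps + 1)"

definition common_subseq :: "(nat \<Rightarrow> 'a) \<Rightarrow> (nat \<Rightarrow> 'a) \<Rightarrow> nat list \<Rightarrow> nat list \<Rightarrow> bool" where
  "common_subseq w1 w2 ps qs \<longleftrightarrow>
     sorted_wrt (<) ps \<and> sorted_wrt (<) qs \<and> length ps = length qs \<and>
     (\<forall>j < length ps. w1 (ps ! j) = w2 (qs ! j))"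

end

theory Submission
  imports Defs
begin

definition phi :: "nat \<Rightarrow> nat \<Rightarrow> nat \<Rightarrow> int" where
  "phi k A p = int p + (int k - 1) * int (p mod A)"

lemma step_same:
  fixes k A p p' :: nat
  assumes k: "k \<ge> 2" and A: "A > 0" and lt: "p < p'"
    and eq: "(p div A) mod k = (p' div A) mod k"
  shows "phi k A p' - phi k A p \<ge> int k"
proof -
  define a where "a = p div A"
  define a' where "a' = p' div A"
  define u where "u = p mod A"
  define u' where "u' = p' mod A"
  have p: "p = A * a + u" and p': "p' = A * a' + u'" unfolding a_def a'_def u_def u'_def by simp_all
  have u: "u < A" "u' < A" unfolding u_def u'_def using A by simp_all
  have aa: "a \<le> a'" unfolding a_def a'_def using lt div_le_mono by simp
  have diff: "phi k A p' - phi k A p = int A * (int a' - int a) + int k * (int u' - int u)"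
  proof -
    have "int p = int A * int a + int u" "int p' = int A * int a' + int u'"
      using p p' by simp_all
    then show ?thesis unfolding phi_def u_def[symmetric] u'_def[symmetric]
      by (simp add: algebra_simps)
  qed
  show ?thesis
  proof (cases "a = a'")
    case True
    then have "u < u'" using lt p p' by simp
    then have "int k * (int u' - int u) \<ge> int k * 1"
      by (intro mult_left_mono) auto
    then show ?thesis using diff True by simp
  next
    case False
    then have "a < a'" using aa by simp
    moreover have "a mod k = a' mod k" using eq a_def a'_def by simp
    ultimately have "a + k \<le> a'"
    proof -
      have "k dvd a' - a" using \<open>a < a'\<close> \<open>a mod k = a' mod k\<close>
        by (metis less_imp_le mod_eq_dvd_iff_nat)
      moreover have "a' - a > 0" using \<open>a < a'\<close> by simp
      ultimately have "k \<le> a' - a" by (simp add: dvd_imp_le)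
      then show ?thesis using \<open>a < a'\<close> by linarith
    qed
    then have "int a' - int a \<ge> int k" by simp
    then have "int A * (int a' - int a) \<ge> int A * int k"
      by (intro mult_left_mono) auto
    moreover have "int k * (int u' - int u) \<ge> int k * (1 - int A)"
      using u by (intro mult_left_mono) auto
    ultimately show ?thesis using diff by (simp add: algebra_simps)
  qed
qed

lemma step_any:
  fixes k A B p p' q q' :: nat
  assumes k: "k \<ge> 2" and A: "A > 0" and B: "B > 0" and lt: "p < p'" and ltq: "q < q'"
    and e1: "fword k A p = fword k B q" and e2: "fword k A p' = fword k B q'"
  shows "phi k A p' - phi k A p \<ge> int k - int k * int A * (int (q' div B) - int (q div B))"
proof (cases "q div B = q' div B")
  case True
  then have "(p div A) mod k = (p' div A) mod k" using e1 e2 unfolding fword_def by simp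
  from step_same[OF k A lt this] True show ?thesis by simp
next
  case False
  then have d: "int (q' div B) - int (q div B) \<ge> 1" using ltq div_le_mono[of q q' B] by simp
  have "int k * int A * (int (q' div B) - int (q div B)) \<ge> int k * int A * 1"
    using d by (intro mult_left_mono) auto
  moreover have "phi k A p' - phi k A p \<ge> 1 - (int k - 1) * (int A - 1)"
  proof -
    have "(int k - 1) * int (p' mod A) \<ge> 0" using k by simp
    moreover have "(int k - 1) * int (p mod A) \<le> (int k - 1) * (int A - 1)"
      using k A by (intro mult_left_mono) (auto simp: int_ops less_Suc_eq_le)
    ultimately show ?thesis unfolding phi_def using lt by linarith
  qed
  ultimately show ?thesis by (simp add: algebra_simps)
qed

lemma cs_tail: "common_subseq w1 w2 (p # ps) (q # qs) \<Longrightarrow> common_subseq w1 w2 ps qs"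
  unfolding common_subseq_def by (auto, metis Suc_less_eq nth_Cons_Suc)

lemma telescope:
  assumes k: "k \<ge> 2" and A: "A > 0" and B: "B > 0"
  shows "common_subseq (fword k A) (fword k B) ps qs \<Longrightarrow> ps \<noteq> [] \<Longrightarrow>
    phi k A (last ps) - phi k A (hd ps) \<ge>
      int k * (int (length ps) - 1) - int k * int A * (int (last qs div B) - int (hd qs div B))"
proof (induction ps arbitrary: qs)
  case Nil
  then show ?case by simp
next
  case (Cons p ps)
  from Cons.prems obtain q qs' where qs: "qs = q # qs'" and len: "length qs' = length ps"
    unfolding common_subseq_def by (cases qs) auto
  show ?case
  proof (cases "ps = []")
    case True
    then show ?thesis using qs len by simp
  next
    case False
    have cs: "common_subseq (fword k A) (fword k B) ps qs'" using Cons.prems qs cs_tail by blast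
    have ne: "qs' \<noteq> []" using False len by auto
    from Cons.IH[OF cs False] have IH: "phi k A (last ps) - phi k A (hd ps) \<ge>
      int k * (int (length ps) - 1) - int k * int A * (int (last qs' div B) - int (hd qs' div B))" .
    have "p < hd ps" using Cons.prems False unfolding common_subseq_def
      by (cases ps) auto
    moreover have "q < hd qs'" using Cons.prems ne qs unfolding common_subseq_def
      by (cases qs') auto
    moreover have "fword k A p = fword k B q" using Cons.prems qs unfolding common_subseq_def
      by force
    moreover have "fword k A (hd ps) = fword k B (hd qs')"
    proof -
      have H: "\<forall>j<length (p#ps). fword k A ((p#ps) ! j) = fword k B (qs ! j)"
        using Cons.prems unfolding common_subseq_def by blast
      have "1 < length (p#ps)" using False by (cases ps) auto
      with H have "fword k A ((p#ps) ! 1) = fword k B (qs ! 1)" by blast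
      then show ?thesis using False ne qs by (cases ps; cases qs') auto
    qed
    ultimately have st: "phi k A (hd ps) - phi k A p \<ge>
        int k - int k * int A * (int (hd qs' div B) - int (q div B))"
      using step_any[OF k A B] by blast
    have "last (p#ps) = last ps" "last qs = last qs'" using False ne qs by auto
    then show ?thesis using IH st qs by (simp add: algebra_simps)
  qed
qed

lemma sorted_span: "sorted_wrt (<) (xs::nat list) \<Longrightarrow> xs \<noteq> [] \<Longrightarrow> hd xs + length xs - 1 \<le> last xs"
proof (induction xs)
  case Nil then show ?case by simp
next
  case (Cons x xs)
  show ?case
  proof (cases "xs = []")
    case True then show ?thesis by simp
  next
    case False
    then have h: "x < hd xs" using Cons.prems by (cases xs) auto
    have IH: "hd xs + length xs - 1 \<le> last xs" using Cons False by auto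
    have "length xs \<ge> 1" using False by (cases xs) auto
    then show ?thesis using h IH False by simp
  qed
qed

lemma final_arith:
  fixes x s n d k A B :: real
  assumes hx: "x \<ge> k*n - k*A*d - k*A + A" and hs1: "s \<ge> n" and hs2: "s \<ge> (d-1)*B + 2"
    and A: "A > 0" and B: "B > 0" and kAB: "k*A \<le> B" and k: "k \<ge> 0"
  shows "x + s \<ge> (k + 1 - k*A/B) * n - 2*(A+B)"
proof -
  define t where "t = k*A/B"
  have t0: "t \<ge> 0" unfolding t_def using A B k by simp
  have t1: "t \<le> 1" unfolding t_def using kAB B by simp
  have "t * s \<ge> t * ((d-1)*B)" using hs2 t0 by (intro mult_left_mono) auto
  moreover have "t * ((d-1)*B) = k*A*d - k*A" unfolding t_def using B by (simp add: field_simps)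
  ultimately have ts: "t*s \<ge> k*A*d - k*A" by simp
  have "(1-t)*n \<le> (1-t)*s" using hs1 t1 by (intro mult_left_mono) auto
  then have "(k + 1 - t) * n \<le> k*n + s - t*s" by (simp add: algebra_simps)
  then show ?thesis unfolding t_def[symmetric] using hx ts kAB A by (smt (verit))
qed

theorem lemma3p3:
  fixes k A B :: nat and ps qs :: "nat list"
  assumes "k \<ge> 2" and "A > 0" and "B > 0" and "k * A \<le> B"
    and "common_subseq (fword k A) (fword k B) ps qs"
  shows "real (span_pos ps + span_pos qs) \<ge>
           (real k + 1 - real k * real A / real B) * real (length ps) - 2 * (real A + real B)"
proof (cases "ps = []")
  case True
  then show ?thesis using assms(2,3) by simp
next
  case False
  note cs = assms(5)
  have len: "length qs = length ps" and sp: "sorted_wrt (<) ps" and sq: "sorted_wrt (<) qs"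
    using cs unfolding common_subseq_def by auto
  have qne: "qs \<noteq> []" using False len by auto
  define n where "n = length ps"
  define D where "D = int (last qs div B) - int (hd qs div B)"
  have tel: "phi k A (last ps) - phi k A (hd ps) \<ge> int k * (int n - 1) - int k * int A * D"
    using telescope[OF assms(1-3) cs False] unfolding n_def D_def .
  have pl: "hd ps + n - 1 \<le> last ps" using sorted_span[OF sp False] n_def by simp
  have ql: "hd qs + n - 1 \<le> last qs" using sorted_span[OF sq qne] n_def len by simp
  have n1: "n \<ge> 1" using False n_def by (cases ps) auto
  have X: "int (span_pos ps) = int (last ps) - int (hd ps) + 1"
    using False pl n1 unfolding span_pos_def by simp
  have S: "int (span_pos qs) = int (last qs) - int (hd qs) + 1"
    using qne ql n1 unfolding span_pos_def by simp
  have ph: "phi k A (last ps) - phi k A (hd ps) \<le> int (last ps) - int (hd ps) + (int k - 1) * (int A - 1)"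
  proof -
    have "(int k - 1) * int (hd ps mod A) \<ge> 0" using assms(1) by simp
    moreover have "(int k - 1) * int (last ps mod A) \<le> (int k - 1) * (int A - 1)"
      using assms(1,2) by (intro mult_left_mono) (auto simp: int_ops less_Suc_eq_le)
    ultimately show ?thesis unfolding phi_def by linarith
  qed
  have Xb: "int (span_pos ps) \<ge> int k * int n - int k * int A * D - int k * int A + int A"
    using X tel ph by (simp add: algebra_simps)
  have Sb1: "int (span_pos qs) \<ge> int n" using S ql n1 by linarith
  have Sb2: "int (span_pos qs) \<ge> (D - 1) * int B + 2"
  proof -
    have a: "int B * int (last qs div B) \<le> int (last qs)"
      by (metis of_nat_le_iff of_nat_mult times_div_less_eq_dividend)
    have b: "int (hd qs) < int B * int (hd qs div B) + int B"
    proof -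
      have "hd qs < B * (hd qs div B) + B"
        using assms(3) by (metis add.commute div_mult_mod_eq mod_less_divisor mult.commute nat_add_left_cancel_less)
      then show ?thesis by (metis of_nat_add of_nat_less_iff of_nat_mult)
    qed
    have "(D - 1) * int B = int B * int (last qs div B) - int B * int (hd qs div B) - int B"
      unfolding D_def by (simp add: algebra_simps)
    then show ?thesis using S a b by linarith
  qed
  have R: "real (span_pos ps) + real (span_pos qs) \<ge>
      (real k + 1 - real k * real A / real B) * real n - 2 * (real A + real B)"
  proof (rule final_arith)
    show "real (span_pos ps) \<ge> real k * real n - real k * real A * real_of_int D - real k * real A + real A"
      using Xb by (metis (mono_tags) of_int_le_iff of_int_add of_int_diff of_int_mult of_int_of_nat_eq)
    show "real (span_pos qs) \<ge> real n" using Sb1 by simp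
    show "real (span_pos qs) \<ge> (real_of_int D - 1) * real B + 2"
      using Sb2 by (metis (mono_tags) of_int_le_iff of_int_add of_int_diff of_int_mult of_int_of_nat_eq of_int_1 of_int_numeral)
    show "real k * real A \<le> real B" using assms(4) by (metis of_nat_le_iff of_nat_mult)
  qed (use assms in auto)
  then show ?thesis unfolding n_def by simp
qed

end
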